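(* Let $G$ be a compact Hausdorff group with normalized Haar measure $m_G$, let $(\Phi,\Psi)$ be a pair of complementary Young functions both satisfying the $\Delta_2$-condition, and let $\mu\in M(G)$. Then the vector measure $\nu_{\Phi,\mu}$ is absolutely continuous with respect to $m_G$, i.e. $\lim_{m_G(A)\to0}\|\nu_{\Phi,\mu}(A)\|_\Phi=0$. Moreover, if $\mu(G)\neq0$, then $m_G$ is absolutely continuous with respect to $\nu_{\Phi,\mu}$, i.e. every $\nu_{\Phi,\mu}$-null Borel set is $m_G$-null.
   Context: $M(G)$: bounded complex Radon measures on $G$. Young function: convex $\Phi:[0,\infty]\to[0,\infty]$, $\Phi(0)=0$, $\lim_{x\to\infty}\Phi(x)=\infty$; complementary $\Psi(y)=\sup\{xy-\Phi(x):x\ge0\}$; $\Delta_2$: $\exists K,x_0>0$, $\Phi(2x)\le K\Phi(x)$ for $x\ge x_0$. $L^\Phi(G)$: Orlicz space with Luxemburg norm $\|f\|_\Phi=\inf\{k>0:\int_G\Phi(|f|/k)dm_G\le1\}$. $\mu*f(t)=\int_Gf(s^{-1}t)\,d\mu(s)$; $\nu_{\Phi,\mu}(A)=\mu*\chi_A\in L^\Phi(G)$ for Borel $A$. A Borel set $A$ is $\nu$-null if $\nu(B)=0$ for all Borel $B\subseteq A$. *)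

theory Defs
  imports "HOL-Analysis.Analysis"
begin

text \<open>Young function (finite-valued on [0,\<infinity>); values at negative arguments are irrelevant).\<close>
definition young_function :: "(real \<Rightarrow> real) \<Rightarrow> bool" where
  "young_function \<Phi> \<longleftrightarrow> convex_on {0..} \<Phi> \<and> \<Phi> 0 = 0 \<and> (\<forall>x\<ge>0. 0 \<le> \<Phi> x)
     \<and> filterlim \<Phi> at_top at_top"

definition complementary :: "(real \<Rightarrow> real) \<Rightarrow> real \<Rightarrow> ennreal" where
  "complementary \<Phi> y = (SUP x\<in>{0..}. ennreal (x * y - \<Phi> x))"

definition delta2 :: "(real \<Rightarrow> ennreal) \<Rightarrow> bool" where
  "delta2 F \<longleftrightarrow> (\<exists>K x0. K > 0 \<and> x0 > 0 \<and> (\<forall>x\<ge>x0. F (2 * x) \<le> ennreal K * F x))"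

definition luxemburg_norm :: "(real \<Rightarrow> real) \<Rightarrow> 'a measure \<Rightarrow> ('a \<Rightarrow> complex) \<Rightarrow> real" where
  "luxemburg_norm \<Phi> m f =
     Inf {k::real. k > 0 \<and> (\<integral>\<^sup>+ x. ennreal (\<Phi> (cmod (f x) / k)) \<partial>m) \<le> 1}"

definition regular_borel :: "'a::topological_space measure \<Rightarrow> bool" where
  "regular_borel M \<longleftrightarrow> sets M = sets borel
     \<and> (\<forall>A\<in>sets borel. emeasure M A = (INF U\<in>{U. open U \<and> A \<subseteq> U}. emeasure M U))
     \<and> (\<forall>U. open U \<longrightarrow> emeasure M U = (SUP K\<in>{K. compact K \<and> K \<subseteq> U}. emeasure M K))"

text \<open>Normalized Haar measure on a compact group (group written additively, not necessarily abelian).\<close>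
definition normalized_haar :: "'g::topological_group_add measure \<Rightarrow> bool" where
  "normalized_haar m \<longleftrightarrow> emeasure m (space m) = 1 \<and> regular_borel m
     \<and> (\<forall>x. \<forall>A\<in>sets borel. emeasure m ((\<lambda>y. x + y) ` A) = emeasure m A)"

text \<open>A bounded complex Radon measure mu is represented as  d mu = h dM  with M a finite
  regular Borel measure and h an M-integrable complex density.
  mu * chi_A (t) = integral of chi_A(s^{-1} t) d mu(s).\<close>
definition conv_indicator :: "'g::group_add measure \<Rightarrow> ('g \<Rightarrow> complex) \<Rightarrow> 'g set \<Rightarrow> 'g \<Rightarrow> complex" where
  "conv_indicator M h A t = (\<integral>s. indicator A (- s + t) * h s \<partial>M)"

end

theory Submission
  imports Defs
begin


definition inner_borel :: "'a::topological_space measure \<Rightarrow> bool" where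
  "inner_borel \<nu> \<longleftrightarrow> (\<forall>E\<in>sets borel. emeasure \<nu> E = (SUP K\<in>{K. compact K \<and> K \<subseteq> E}. emeasure \<nu> K))"

lemma inner_borel_le_eps:
  fixes M :: "'a::t2_space measure"
  assumes "sets M = sets borel" "E \<in> sets borel"
    and "\<And>e. e > 0 \<Longrightarrow> \<exists>K. compact K \<and> K \<subseteq> E \<and> emeasure M E \<le> emeasure M K + ennreal e"
  shows "emeasure M E = (SUP K\<in>{K. compact K \<and> K \<subseteq> E}. emeasure M K)"
proof (rule antisym)
  show "(SUP K\<in>{K. compact K \<and> K \<subseteq> E}. emeasure M K) \<le> emeasure M E"
    using assms(1,2) by (auto intro!: SUP_least emeasure_mono)
  show "emeasure M E \<le> (SUP K\<in>{K. compact K \<and> K \<subseteq> E}. emeasure M K)"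
  proof (rule ennreal_le_epsilon)
    fix e :: real assume "0 < e"
    then obtain K where K: "compact K" "K \<subseteq> E" "emeasure M E \<le> emeasure M K + ennreal e"
      using assms(3) by blast
    have "emeasure M K \<le> (SUP K\<in>{K. compact K \<and> K \<subseteq> E}. emeasure M K)"
      using K by (intro SUP_upper) auto
    then show "emeasure M E \<le> (SUP K\<in>{K. compact K \<and> K \<subseteq> E}. emeasure M K) + ennreal e"
      using K(3) by (meson add_right_mono order_trans)
  qed
qed

lemma regular_inner_borel:
  fixes M :: "'a::t2_space measure"
  assumes fin: "finite_measure M" and reg: "regular_borel M" and cpt: "compact (UNIV::'a set)"
  shows "inner_borel M"
  unfolding inner_borel_def
proof
  fix E :: "'a set" assume E: "E \<in> sets borel"
  interpret finite_measure M by fact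
  have sM: "sets M = sets borel" using reg unfolding regular_borel_def by auto
  have spM: "space M = UNIV" using sets_eq_imp_space_eq[OF sM] by simp
  have E': "-E \<in> sets borel" using E by auto
  have outer: "emeasure M (-E) = (INF U\<in>{U. open U \<and> -E \<subseteq> U}. emeasure M U)"
    using reg E' unfolding regular_borel_def by blast
  show "emeasure M E = (SUP K\<in>{K. compact K \<and> K \<subseteq> E}. emeasure M K)"
  proof (rule inner_borel_le_eps[OF sM E])
    fix e :: real assume e: "e > 0"
    have "emeasure M (-E) < emeasure M (-E) + ennreal e"
      using e emeasure_real by (simp add: ennreal_plus[symmetric] del: ennreal_plus)
    then obtain U where U: "open U" "-E \<subseteq> U" "emeasure M U < emeasure M (-E) + ennreal e"
      unfolding outer by (auto simp: INF_less_iff)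
    have Ub: "U \<in> sets M" using U sM by auto
    have E'M: "-E \<in> sets M" using E' sM by auto
    have "ennreal (measure M U) < ennreal (measure M (-E) + e)"
      using U(3) e by (simp add: emeasure_eq_measure ennreal_plus)
    then have "measure M U < measure M (-E) + e"
      by (simp add: ennreal_less_iff)
    moreover have "measure M E = measure M (space M) - measure M (-E)"
      using finite_measure_compl[OF E'M] spM by (simp add: Compl_eq_Diff_UNIV Diff_Diff_Int)
    moreover have "measure M (-U) = measure M (space M) - measure M U"
      using finite_measure_compl[OF Ub] spM by (simp add: Compl_eq_Diff_UNIV)
    ultimately have "measure M E \<le> measure M (-U) + e" by simp
    moreover have "compact (-U)"
      using U(1) cpt by (metis closed_Compl compact_Int_closed inf_top_left)
    moreover have "-U \<subseteq> E" using U(2) by auto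
    ultimately show "\<exists>K. compact K \<and> K \<subseteq> E \<and> emeasure M E \<le> emeasure M K + ennreal e"
      using e by (intro exI[of _ "-U"]) (auto simp: emeasure_eq_measure ennreal_plus[symmetric] simp del: ennreal_plus intro!: ennreal_leI)
  qed
qed


lemma inner_borel_approx:
  fixes M :: "'a::topological_space measure"
  assumes "inner_borel M" "finite_measure M" "E \<in> sets borel" "e > 0"
  shows "\<exists>K. compact K \<and> K \<subseteq> E \<and> measure M E \<le> measure M K + e"
proof (cases "measure M E \<le> e")
  case True
  then show ?thesis by (intro exI[of _ "{}"]) auto
next
  case False
  interpret finite_measure M by fact
  have "ennreal (measure M E - e) < ennreal (measure M E)"
    using False assms(4) by (simp add: ennreal_less_iff)
  also have "\<dots> = (SUP K\<in>{K. compact K \<and> K \<subseteq> E}. emeasure M K)"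
    using assms(1,3) unfolding inner_borel_def by (simp add: emeasure_eq_measure)
  finally obtain K where K: "compact K" "K \<subseteq> E" "ennreal (measure M E - e) < emeasure M K"
    by (auto simp: less_SUP_iff)
  then have "measure M E - e < measure M K"
    using False by (simp add: emeasure_eq_measure ennreal_less_iff)
  then show ?thesis using K by (intro exI[of _ K]) auto
qed

lemma density_inner_borel:
  fixes M :: "'a::t2_space measure"
  assumes fin: "finite_measure M" and sM: "sets M = sets borel" and inn: "inner_borel M"
    and g: "g \<in> borel_measurable M"
  shows "inner_borel (density M g)"
  unfolding inner_borel_def
proof
  fix E :: "'a set" assume E: "E \<in> sets borel"
  interpret finite_measure M by fact
  have "\<forall>n::nat. \<exists>K. compact K \<and> K \<subseteq> E \<and> measure M E \<le> measure M K + 1 / (Suc n)"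
    using inner_borel_approx[OF inn fin E] by simp
  then obtain K where K: "\<And>n. compact (K n)" "\<And>n. K n \<subseteq> E"
     "\<And>n. measure M E \<le> measure M (K n) + 1 / (Suc n)" by metis
  define L where "L n = (\<Union>i\<le>n. K i)" for n
  have Lc: "compact (L n)" for n unfolding L_def using K(1) by (intro compact_UN) auto
  have LE: "L n \<subseteq> E" for n unfolding L_def using K(2) by auto
  have Kb: "K n \<in> sets M" for n using K(1) sM by (simp add: compact_imp_closed borel_closed)
  have Lb: "L n \<in> sets M" for n using Lc sM by (simp add: compact_imp_closed borel_closed)
  have inc: "incseq L" unfolding L_def incseq_def by (auto 0 3 intro: order_trans)
  have EM: "E \<in> sets M" using E sM by simp
  define N where "N = E - (\<Union>n. L n)"
  have NM: "N \<in> sets M" unfolding N_def using EM Lb by auto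
  have "measure M N \<le> 1 / Suc n" for n
  proof -
    have "N \<subseteq> E - K n" unfolding N_def L_def by auto
    then have "measure M N \<le> measure M (E - K n)"
      using EM Kb by (intro finite_measure_mono) auto
    also have "\<dots> = measure M E - measure M (K n)"
      using K(2)[of n] Lb[of n] EM
      by (subst finite_measure_Diff) (auto simp: L_def Int_absorb2 sM compact_imp_closed borel_closed K(1))
    finally show ?thesis using K(3)[of n] by simp
  qed
  note Nb = this
  have "measure M N \<le> 0"
  proof (rule ccontr)
    assume "\<not> measure M N \<le> 0"
    then obtain k where k: "k > 0" "inverse (real k) < measure M N"
      using ex_inverse_of_nat_less by (metis not_le)
    then obtain n where "k = Suc n" using gr0_implies_Suc by blast
    with k have "inverse (real (Suc n)) < measure M N" by simp
    then show False using Nb[of n] by (simp add: inverse_eq_divide)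
  qed
  then have Nnull: "N \<in> null_sets M"
    using NM by (simp add: emeasure_eq_measure null_sets_def measure_nonneg antisym)
  then have Nnull': "N \<in> null_sets (density M g)"
    using NM g by (subst null_sets_density_iff) (auto intro: AE_mp[OF AE_not_in[OF Nnull]])
  have "E = (\<Union>n. L n) \<union> N" unfolding N_def using LE by auto
  then have "emeasure (density M g) E = emeasure (density M g) (\<Union>n. L n)"
  proof -
    have "(\<Union>n. L n) \<in> sets (density M g)" using Lb by auto
    then show ?thesis using Nnull' \<open>E = (\<Union>n. L n) \<union> N\<close> by (metis emeasure_Un_null_set)
  qed
  also have "\<dots> = (SUP n. emeasure (density M g) (L n))"
    using inc Lb by (intro SUP_emeasure_incseq[symmetric]) auto
  also have "\<dots> \<le> (SUP K\<in>{K. compact K \<and> K \<subseteq> E}. emeasure (density M g) K)"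
    using Lc LE by (intro SUP_mono) auto
  finally show "emeasure (density M g) E = (SUP K\<in>{K. compact K \<and> K \<subseteq> E}. emeasure (density M g) K)"
    using EM sM by (intro antisym) (auto intro!: SUP_least emeasure_mono)
qed


lemma inner_borel_open:
  assumes "inner_borel \<nu>" "open U"
  shows "emeasure \<nu> U = (SUP K\<in>{K. compact K \<and> K \<subseteq> U}. emeasure \<nu> K)"
  using assms unfolding inner_borel_def by auto

lemma tubeA:
  fixes \<nu> :: "'a::t2_space measure" and m :: "'b::t2_space measure" and W :: "('a \<times> 'b) set"
  assumes sn: "sets \<nu> = sets borel" and sm: "sets m = sets borel"
    and inn: "inner_borel \<nu>" and W: "open W"
    and C: "compact C" and gt: "\<forall>y\<in>C. c < emeasure \<nu> {x. (x,y) \<in> W}"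
  shows "\<exists>R\<in>sets (\<nu> \<Otimes>\<^sub>M m). R \<subseteq> W \<and> (\<forall>y\<in>C. c \<le> emeasure \<nu> ((\<lambda>x. (x,y)) -` R))"
proof -
  have "\<forall>y\<in>C. \<exists>D N. compact D \<and> open N \<and> y \<in> N \<and> D \<times> N \<subseteq> W \<and> c < emeasure \<nu> D"
  proof
    fix y assume y: "y \<in> C"
    have op: "open {x. (x,y) \<in> W}"
    proof -
      have "continuous_on UNIV (\<lambda>x::'a. (x,y))" by (intro continuous_intros)
      then have "open ((\<lambda>x. (x,y)) -` W \<inter> UNIV)"
        using W continuous_on_open_vimage[of UNIV "\<lambda>x::'a. (x,y)"] by auto
      then show ?thesis by (simp add: vimage_def)
    qed
    from gt y have "c < (SUP K\<in>{K. compact K \<and> K \<subseteq> {x. (x,y) \<in> W}}. emeasure \<nu> K)"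
      using inner_borel_open[OF inn op] by metis
    then obtain D where D: "compact D" "D \<subseteq> {x. (x,y) \<in> W}" "c < emeasure \<nu> D"
      by (auto simp: less_SUP_iff)
    have "D \<times> {y} \<subseteq> W" using D(2) by auto
    then obtain U N where "openin euclidean U" "openin euclidean N" "D \<subseteq> U" "y \<in> N" "U \<times> N \<subseteq> W"
      using tube_lemma_left[of euclidean euclidean W D y] W D(1)
      by (auto simp: compactin_euclidean_iff)
    then show "\<exists>D N. compact D \<and> open N \<and> y \<in> N \<and> D \<times> N \<subseteq> W \<and> c < emeasure \<nu> D"
      using D by (intro exI[of _ D] exI[of _ N]) auto
  qed
  then obtain D N where DN: "\<And>y. y \<in> C \<Longrightarrow> compact (D y) \<and> open (N y) \<and> y \<in> N y \<and> D y \<times> N y \<subseteq> W \<and> c < emeasure \<nu> (D y)"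
    by metis
  have "C \<subseteq> (\<Union>y\<in>C. N y)" using DN by auto
  then obtain T where T: "T \<subseteq> C" "finite T" "C \<subseteq> (\<Union>y\<in>T. N y)"
    using compactE_image[OF C, of C N] DN by blast
  define R where "R = (\<Union>y\<in>T. D y \<times> N y)"
  have "R \<in> sets (\<nu> \<Otimes>\<^sub>M m)"
    unfolding R_def
  proof (intro sets.finite_UN[OF T(2)] ballI pair_measureI)
    fix y assume "y \<in> T"
    then show "D y \<in> sets \<nu>" "N y \<in> sets m"
      using DN[of y] T(1) sn sm by (auto simp: compact_imp_closed borel_closed borel_open)
  qed
  moreover have "R \<subseteq> W" unfolding R_def using DN T(1) by blast
  moreover have "c \<le> emeasure \<nu> ((\<lambda>x. (x,y)) -` R)" if y: "y \<in> C" for y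
  proof -
    obtain z where z: "z \<in> T" "y \<in> N z" using T(3) y by auto
    have "c \<le> emeasure \<nu> (D z)" using DN[of z] z T(1) by (auto intro: less_imp_le)
    also have "\<dots> \<le> emeasure \<nu> ((\<lambda>x. (x,y)) -` R)"
      using z \<open>R \<in> sets (\<nu> \<Otimes>\<^sub>M m)\<close>
      by (intro emeasure_mono sets_Pair2) (auto simp: R_def)
    finally show ?thesis .
  qed
  ultimately show ?thesis by blast
qed


lemma per_term:
  fixes r a b \<epsilon> Nn Nm :: real
  assumes "0 \<le> r" "r \<le> Nn" "0 \<le> a" "a \<le> b + \<epsilon>" "0 \<le> b" "b \<le> Nm" "0 < \<epsilon>"
  shows "ennreal r * ennreal a \<le> ennreal (r - \<epsilon>) * ennreal b + ennreal (\<epsilon> * (Nn + Nm))"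
proof -
  have 1: "r * a \<le> r * b + r * \<epsilon>" using assms by (metis distrib_left mult_left_mono)
  have 2: "r * \<epsilon> \<le> Nn * \<epsilon>" using assms by (intro mult_right_mono) auto
  have 3: "\<epsilon> * b \<le> \<epsilon> * Nm" using assms by (intro mult_left_mono) auto
  show ?thesis
  proof (cases "r \<ge> \<epsilon>")
    case True
    have "r * a \<le> (r - \<epsilon>) * b + \<epsilon> * (Nn + Nm)"
      using 1 2 3 by (simp add: algebra_simps)
    then show ?thesis using True assms
      by (simp add: ennreal_mult[symmetric] ennreal_plus[symmetric] del: ennreal_plus
          ennreal_mult' add: ennreal_leI)
  next
    case False
    have "r * b \<le> \<epsilon> * b" using False assms by (intro mult_right_mono) auto
    then have "r * a \<le> \<epsilon> * (Nn + Nm)" using 1 2 3 by (simp add: algebra_simps)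
    moreover have "ennreal (r - \<epsilon>) = 0" using False by (simp add: ennreal_eq_0_iff)
    ultimately show ?thesis using assms
      by (simp add: ennreal_mult[symmetric] del: ennreal_mult' add: ennreal_leI)
  qed
qed

lemma GL:
  fixes \<nu> :: "'a::t2_space measure" and m :: "'b::t2_space measure" and W :: "('a \<times> 'b) set"
  assumes fn: "finite_measure \<nu>" and fm: "finite_measure m"
    and sn: "sets \<nu> = sets borel" and sm: "sets m = sets borel"
    and inn: "inner_borel \<nu>" and inm: "inner_borel m" and W: "open W"
    and bnd: "\<And>R. R \<in> sets (\<nu> \<Otimes>\<^sub>M m) \<Longrightarrow> R \<subseteq> W \<Longrightarrow> emeasure (\<nu> \<Otimes>\<^sub>M m) R \<le> B"
  shows "(\<integral>\<^sup>+y. emeasure \<nu> {x. (x,y) \<in> W} \<partial>m) \<le> B"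
  unfolding nn_integral_def_finite
proof (rule SUP_least, clarify)
  fix u assume su: "simple_function m u" and uF: "u \<le> (\<lambda>y. emeasure \<nu> {x. (x,y) \<in> W})"
    and ufin: "\<forall>x. u x < top"
  interpret N: finite_measure \<nu> by fact
  interpret M: finite_measure m by fact
  interpret P: pair_sigma_finite \<nu> m
    using fn fm by (simp add: pair_sigma_finite_def finite_measure_def)
  define V where "V = u ` space m"
  have finV: "finite V" using su unfolding V_def simple_function_def by auto
  define Nn where "Nn = measure \<nu> (space \<nu>)"
  define Nm where "Nm = measure m (space m)"
  define E where "E v = u -` {v} \<inter> space m" for v
  have EM: "E v \<in> sets m" for v using su unfolding E_def by (auto intro: simple_functionD)
  show "integral\<^sup>S m u \<le> B"
  proof (rule ennreal_le_epsilon)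
    fix e :: real assume "B < top" "0 < e"
    define \<epsilon> where "\<epsilon> = e / (real (card V) * (Nn + Nm) + 1)"
    have NnNm: "0 \<le> Nn" "0 \<le> Nm" unfolding Nn_def Nm_def by auto
    have eps: "0 < \<epsilon>" unfolding \<epsilon>_def using \<open>0 < e\<close> NnNm
      by (intro divide_pos_pos) (auto intro!: add_nonneg_pos)
    have "\<forall>v\<in>V. \<exists>C. compact C \<and> C \<subseteq> E v \<and> measure m (E v) \<le> measure m C + \<epsilon>"
      using inner_borel_approx[OF inm fm _ eps] EM sm by auto
    then obtain C where C: "\<And>v. v \<in> V \<Longrightarrow> compact (C v) \<and> C v \<subseteq> E v \<and> measure m (E v) \<le> measure m (C v) + \<epsilon>"
      by metis
    have CM: "v \<in> V \<Longrightarrow> C v \<in> sets m" for v using C[of v] sm by (simp add: compact_imp_closed borel_closed)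
    have vfin: "v \<in> V \<Longrightarrow> v = ennreal (enn2real v)" for v
      using ufin unfolding V_def by (auto simp: less_top)
    have vle: "v \<in> V \<Longrightarrow> enn2real v \<le> Nn" for v
    proof -
      assume "v \<in> V"
      then obtain y where y: "y \<in> space m" "u y = v" unfolding V_def by auto
      have "v \<le> emeasure \<nu> {x. (x,y) \<in> W}" using uF y by (auto simp: le_fun_def)
      also have "\<dots> \<le> emeasure \<nu> (space \<nu>)" using sn by (intro emeasure_space) 
      finally show ?thesis unfolding Nn_def using \<open>v \<in> V\<close> vfin
        by (metis N.emeasure_eq_measure ennreal_le_iff measure_nonneg)
    qed
    have "\<forall>v\<in>V. \<exists>R\<in>sets (\<nu> \<Otimes>\<^sub>M m). R \<subseteq> W \<and> (\<forall>y\<in>C v. ennreal (enn2real v - \<epsilon>) \<le> emeasure \<nu> ((\<lambda>x. (x,y)) -` R))"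
    proof
      fix v assume v: "v \<in> V"
      show "\<exists>R\<in>sets (\<nu> \<Otimes>\<^sub>M m). R \<subseteq> W \<and> (\<forall>y\<in>C v. ennreal (enn2real v - \<epsilon>) \<le> emeasure \<nu> ((\<lambda>x. (x,y)) -` R))"
      proof (cases "enn2real v = 0")
        case True
        then show ?thesis using eps by (intro bexI[of _ "{}"]) (auto simp: ennreal_eq_0_iff)
      next
        case False
        have "\<forall>y\<in>C v. ennreal (enn2real v - \<epsilon>) < emeasure \<nu> {x. (x,y) \<in> W}"
        proof
          fix y assume y: "y \<in> C v"
          then have "u y = v" using C[OF v] unfolding E_def by auto
          then have "v \<le> emeasure \<nu> {x. (x,y) \<in> W}" using uF by (auto simp: le_fun_def)
          moreover have "ennreal (enn2real v - \<epsilon>) < v"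
          proof -
            have "0 < enn2real v" using False enn2real_nonneg[of v] by linarith
            then have "ennreal (enn2real v - \<epsilon>) < ennreal (enn2real v)"
              using eps by (intro ennreal_lessI) auto
            then show ?thesis using vfin[OF v] by simp
          qed
          ultimately show "ennreal (enn2real v - \<epsilon>) < emeasure \<nu> {x. (x,y) \<in> W}" by auto
        qed
        then show ?thesis using tubeA[OF sn sm inn W] C[OF v] by blast
      qed
    qed
    then obtain R where R: "\<And>v. v \<in> V \<Longrightarrow> R v \<in> sets (\<nu> \<Otimes>\<^sub>M m) \<and> R v \<subseteq> W \<and>
        (\<forall>y\<in>C v. ennreal (enn2real v - \<epsilon>) \<le> emeasure \<nu> ((\<lambda>x. (x,y)) -` R v))"
      by metis
    define RR where "RR = (\<Union>v\<in>V. R v)"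
    have RRs: "RR \<in> sets (\<nu> \<Otimes>\<^sub>M m)" unfolding RR_def using R finV by auto
    have RRW: "RR \<subseteq> W" unfolding RR_def using R by auto
    define s where "s y = (\<Sum>v\<in>V. ennreal (enn2real v - \<epsilon>) * indicator (C v) y)" for y
    have s_le: "s y \<le> emeasure \<nu> ((\<lambda>x. (x,y)) -` RR)" for y
    proof -
      have "s y = (\<Sum>v\<in>V. if v = u y then ennreal (enn2real v - \<epsilon>) * indicator (C v) y else 0)"
        unfolding s_def
      proof (rule sum.cong[OF refl])
        fix v assume "v \<in> V"
        then show "ennreal (enn2real v - \<epsilon>) * indicator (C v) y = (if v = u y then ennreal (enn2real v - \<epsilon>) * indicator (C v) y else 0)"
          using C[of v] unfolding E_def by (auto simp: indicator_def)
      qed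
      also have "\<dots> = (if u y \<in> V then ennreal (enn2real (u y) - \<epsilon>) * indicator (C (u y)) y else 0)"
        using finV by (simp add: sum.delta')
      also have "\<dots> \<le> emeasure \<nu> ((\<lambda>x. (x,y)) -` RR)"
      proof (cases "u y \<in> V \<and> y \<in> C (u y)")
        case True
        then have "ennreal (enn2real (u y) - \<epsilon>) \<le> emeasure \<nu> ((\<lambda>x. (x,y)) -` R (u y))"
          using R by blast
        also have "\<dots> \<le> emeasure \<nu> ((\<lambda>x. (x,y)) -` RR)"
          using True RRs by (intro emeasure_mono sets_Pair2) (auto simp: RR_def)
        finally show ?thesis using True by simp
      next
        case False
        then show ?thesis by (auto simp: indicator_def)
      qed
      finally show ?thesis .
    qed
    have mC: "\<And>i c. i \<in> V \<Longrightarrow> (\<lambda>y. (c::ennreal) * indicator (C i) y) \<in> borel_measurable m"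
      by (intro borel_measurable_times_ennreal measurable_const borel_measurable_indicator CM) auto
    have "integral\<^sup>S m u = (\<Sum>v\<in>V. v * emeasure m (E v))"
      unfolding simple_integral_def V_def E_def by simp
    also have "\<dots> \<le> (\<Sum>v\<in>V. ennreal (enn2real v - \<epsilon>) * emeasure m (C v) + ennreal (\<epsilon> * (Nn + Nm)))"
    proof (rule sum_mono)
      fix v assume v: "v \<in> V"
      have "measure m (C v) \<le> Nm" unfolding Nm_def using CM[OF v] by (intro M.bounded_measure)
      then have "ennreal (enn2real v) * ennreal (measure m (E v)) \<le> ennreal (enn2real v - \<epsilon>) * ennreal (measure m (C v)) + ennreal (\<epsilon> * (Nn + Nm))"
        using C[OF v] vle[OF v] eps by (intro per_term) auto
      then show "v * emeasure m (E v) \<le> ennreal (enn2real v - \<epsilon>) * emeasure m (C v) + ennreal (\<epsilon> * (Nn + Nm))"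
        using vfin[OF v] by (simp add: M.emeasure_eq_measure)
    qed
    also have "\<dots> = (\<integral>\<^sup>+y. s y \<partial>m) + of_nat (card V) * ennreal (\<epsilon> * (Nn + Nm))"
    proof -
      have "(\<integral>\<^sup>+y. s y \<partial>m) = (\<Sum>v\<in>V. \<integral>\<^sup>+y. ennreal (enn2real v - \<epsilon>) * indicator (C v) y \<partial>m)"
        unfolding s_def by (rule nn_integral_sum) (rule mC)
      also have "\<dots> = (\<Sum>v\<in>V. ennreal (enn2real v - \<epsilon>) * emeasure m (C v))"
        by (intro sum.cong refl nn_integral_cmult_indicator CM)
      finally show ?thesis by (simp add: sum.distrib)
    qed
    also have "(\<integral>\<^sup>+y. s y \<partial>m) \<le> (\<integral>\<^sup>+y. emeasure \<nu> ((\<lambda>x. (x,y)) -` RR) \<partial>m)"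
      by (intro nn_integral_mono s_le)
    also have "\<dots> = emeasure (\<nu> \<Otimes>\<^sub>M m) RR"
      using P.emeasure_pair_measure_alt2[OF RRs] by simp
    also have "\<dots> \<le> B" using bnd RRs RRW by blast
    also have "of_nat (card V) * ennreal (\<epsilon> * (Nn + Nm)) \<le> ennreal e"
    proof -
      have "real (card V) * (\<epsilon> * (Nn + Nm)) \<le> e"
      proof -
        have "real (card V) * (\<epsilon> * (Nn + Nm)) = e * ((real (card V) * (Nn + Nm)) / (real (card V) * (Nn + Nm) + 1))"
          unfolding \<epsilon>_def by (simp add: field_simps)
        also have "\<dots> \<le> e * 1"
          using \<open>0 < e\<close> NnNm by (intro mult_left_mono) (auto simp: divide_le_eq_1 add_nonneg_pos)
        finally show ?thesis by simp
      qed
      then show ?thesis using eps NnNm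
        by (simp add: ennreal_of_nat_eq_real_of_nat ennreal_mult[symmetric] ennreal_leI del: ennreal_mult')
    qed
    finally show "integral\<^sup>S m u \<le> B + ennreal e" by (simp add: add_mono)
  qed
qed


lemma open_section:
  assumes W: "open (W :: ('a::topological_space \<times> 'b::topological_space) set)"
  shows "open {x. (x,y) \<in> W}"
proof -
  have "continuous_on UNIV (\<lambda>x::'a. (x,y))" by (intro continuous_intros)
  then have "open ((\<lambda>x. (x,y)) -` W \<inter> UNIV)"
    using W continuous_on_open_vimage[of UNIV "\<lambda>x::'a. (x,y)"] by auto
  then show ?thesis by (simp add: vimage_def)
qed

lemma tube_nbhd:
  fixes \<nu> :: "'a::t2_space measure" and W :: "('a \<times> 'b::topological_space) set"
  assumes inn: "inner_borel \<nu>" and W: "open W" and gt: "c < emeasure \<nu> {x. (x,y) \<in> W}"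
  shows "\<exists>D N. compact D \<and> open N \<and> y \<in> N \<and> D \<times> N \<subseteq> W \<and> c < emeasure \<nu> D"
proof -
  have op: "open {x. (x,y) \<in> W}"
  proof -
    have "continuous_on UNIV (\<lambda>x::'a. (x,y))" by (intro continuous_intros)
    then have "open ((\<lambda>x. (x,y)) -` W \<inter> UNIV)"
      using W continuous_on_open_vimage[of UNIV "\<lambda>x::'a. (x,y)"] by auto
    then show ?thesis by (simp add: vimage_def)
  qed
  from gt have "c < (SUP K\<in>{K. compact K \<and> K \<subseteq> {x. (x,y) \<in> W}}. emeasure \<nu> K)"
    using inner_borel_open[OF inn op] by metis
  then obtain D where D: "compact D" "D \<subseteq> {x. (x,y) \<in> W}" "c < emeasure \<nu> D"
    by (auto simp: less_SUP_iff)
  have "D \<times> {y} \<subseteq> W" using D(2) by auto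
  then obtain U N where "openin euclidean U" "openin euclidean N" "D \<subseteq> U" "y \<in> N" "U \<times> N \<subseteq> W"
    using tube_lemma_left[of euclidean euclidean W D y] W D(1)
    by (auto simp: compactin_euclidean_iff)
  then show ?thesis
    using D by (intro exI[of _ D] exI[of _ N]) auto
qed

lemma section_measurable:
  fixes \<nu> :: "'a::t2_space measure" and m :: "'b::topological_space measure" and W :: "('a \<times> 'b) set"
  assumes inn: "inner_borel \<nu>" and W: "open W" and sm: "sets m = sets borel" and sn: "sets \<nu> = sets borel"
  shows "(\<lambda>y. emeasure \<nu> {x. (x,y) \<in> W}) \<in> borel_measurable m"
proof (rule borel_measurableI_greater)
  fix c
  have "open {y. c < emeasure \<nu> {x. (x,y) \<in> W}}"
    unfolding open_subopen[of "{y. c < emeasure \<nu> {x. (x,y) \<in> W}}"]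
  proof (intro ballI)
    fix y assume "y \<in> {y. c < emeasure \<nu> {x. (x,y) \<in> W}}"
    then have "c < emeasure \<nu> {x. (x,y) \<in> W}" by simp
    from tube_nbhd[OF inn W this]
    obtain D N where DN: "compact D" "open N" "y \<in> N" "D \<times> N \<subseteq> W" "c < emeasure \<nu> D"
      by blast
    have "N \<subseteq> {y. c < emeasure \<nu> {x. (x,y) \<in> W}}"
    proof
      fix y' assume "y' \<in> N"
      then have "D \<subseteq> {x. (x,y') \<in> W}" using DN(4) by auto
      then show "y' \<in> {y. c < emeasure \<nu> {x. (x,y) \<in> W}}"
      proof -
        have "emeasure \<nu> D \<le> emeasure \<nu> {x. (x,y') \<in> W}"
          using \<open>D \<subseteq> _\<close> open_section[OF W, of y'] sn by (intro emeasure_mono) auto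
        then show ?thesis using DN(5) by (simp add: less_le_trans)
      qed
    qed
    then show "\<exists>T. open T \<and> y \<in> T \<and> T \<subseteq> {y. c < emeasure \<nu> {x. (x,y) \<in> W}}"
      using DN(2,3) by blast
  qed
  then have "{y. c < emeasure \<nu> {x. (x,y) \<in> W}} \<in> sets m"
    using sm by (simp add: borel_open)
  moreover have "{y \<in> space m. c < emeasure \<nu> {x. (x,y) \<in> W}} = space m \<inter> {y. c < emeasure \<nu> {x. (x,y) \<in> W}}"
    by blast
  ultimately show "{y \<in> space m. c < emeasure \<nu> {x. (x,y) \<in> W}} \<in> sets m"
    using sets.Int[OF sets.top] by simp
qed


lemma haar_facts:
  fixes m :: "'g::{topological_group_add,t2_space} measure"
  assumes cpt: "compact (UNIV::'g set)" and haar: "normalized_haar m"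
  shows "finite_measure m" "sets m = sets borel" "inner_borel m" "space m = UNIV"
    "\<And>x A. A \<in> sets borel \<Longrightarrow> emeasure m ((\<lambda>y. x + y) ` A) = emeasure m A"
proof -
  show sm: "sets m = sets borel" using haar unfolding normalized_haar_def regular_borel_def by auto
  show fm: "finite_measure m" using haar unfolding normalized_haar_def by (intro finite_measureI) auto
  show "inner_borel m" using regular_inner_borel[OF fm _ cpt] haar unfolding normalized_haar_def by auto
  show "space m = UNIV" using sets_eq_imp_space_eq[OF sm] by simp
  show "\<And>x A. A \<in> sets borel \<Longrightarrow> emeasure m ((\<lambda>y. x + y) ` A) = emeasure m A"
    using haar unfolding normalized_haar_def by auto
qed

lemma open_trans_set:
  fixes U :: "'g::topological_group_add set"
  assumes "open U"
  shows "open {t. -s + t \<in> U}" "open {s. -s + t \<in> U}"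
proof -
  have "continuous_on UNIV (\<lambda>t::'g. -s + t)" by (intro continuous_intros)
  then have "open ((\<lambda>t::'g. -s + t) -` U \<inter> UNIV)"
    using assms continuous_on_open_vimage[of UNIV "\<lambda>t::'g. -s + t"] by auto
  then show "open {t. -s + t \<in> U}" by (simp add: vimage_def)
  have "continuous_on UNIV (\<lambda>s::'g. -s + t)" by (intro continuous_intros)
  then have "open ((\<lambda>s::'g. -s + t) -` U \<inter> UNIV)"
    using assms continuous_on_open_vimage[of UNIV "\<lambda>s::'g. -s + t"] by auto
  then show "open {s. -s + t \<in> U}" by (simp add: vimage_def)
qed

lemma haar_trans_meas:
  fixes m :: "'g::{topological_group_add,t2_space} measure"
  assumes cpt: "compact (UNIV::'g set)" and haar: "normalized_haar m" and U: "open U"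
  shows "emeasure m {t. -s + t \<in> U} = emeasure m U"
proof -
  have "{t. -s + t \<in> U} = (\<lambda>y. s + y) ` U"
    by (auto simp: image_iff) (metis add_minus_cancel)
  then show ?thesis using haar_facts(5)[OF cpt haar, of U s] U by (simp add: borel_open)
qed

lemma haar_fubini:
  fixes m \<nu> :: "'g::{topological_group_add,t2_space} measure"
  assumes cpt: "compact (UNIV::'g set)" and haar: "normalized_haar m"
    and fn: "finite_measure \<nu>" and sn: "sets \<nu> = sets borel" and inn: "inner_borel \<nu>"
    and U: "open U"
  shows "(\<integral>\<^sup>+t. emeasure \<nu> {s. -s + t \<in> U} \<partial>m) = emeasure \<nu> (space \<nu>) * emeasure m U"
proof -
  note hf = haar_facts[OF cpt haar]
  interpret N: finite_measure \<nu> by fact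
  interpret M: finite_measure m by (rule hf(1))
  define W where "W = {p::'g\<times>'g. -fst p + snd p \<in> U}"
  define W2 where "W2 = {p::'g\<times>'g. -snd p + fst p \<in> U}"
  have Wo: "open W" unfolding W_def
  proof -
    have "continuous_on UNIV (\<lambda>p::'g\<times>'g. -fst p + snd p)" by (intro continuous_intros)
    then have "open ((\<lambda>p::'g\<times>'g. -fst p + snd p) -` U \<inter> UNIV)"
      using U continuous_on_open_vimage[of UNIV "\<lambda>p::'g\<times>'g. -fst p + snd p"] by auto
    then show "open {p::'g\<times>'g. -fst p + snd p \<in> U}" by (simp add: vimage_def)
  qed
  have W2o: "open W2" unfolding W2_def
  proof -
    have "continuous_on UNIV (\<lambda>p::'g\<times>'g. -snd p + fst p)" by (intro continuous_intros)
    then have "open ((\<lambda>p::'g\<times>'g. -snd p + fst p) -` U \<inter> UNIV)"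
      using U continuous_on_open_vimage[of UNIV "\<lambda>p::'g\<times>'g. -snd p + fst p"] by auto
    then show "open {p::'g\<times>'g. -snd p + fst p \<in> U}" by (simp add: vimage_def)
  qed
  have le: "(\<integral>\<^sup>+t. emeasure \<nu> {x. (x,t) \<in> W} \<partial>m) \<le> emeasure m U * emeasure \<nu> (space \<nu>)"
  proof (rule GL[OF fn hf(1) sn hf(2) inn hf(3) Wo])
    fix R assume R: "R \<in> sets (\<nu> \<Otimes>\<^sub>M m)" "R \<subseteq> W"
    have "emeasure (\<nu> \<Otimes>\<^sub>M m) R = (\<integral>\<^sup>+s. emeasure m (Pair s -` R) \<partial>\<nu>)"
      by (rule M.emeasure_pair_measure_alt[OF R(1)])
    also have "\<dots> \<le> (\<integral>\<^sup>+s. emeasure m U \<partial>\<nu>)"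
    proof (rule nn_integral_mono)
      fix s
      have "emeasure m (Pair s -` R) \<le> emeasure m {t. -s + t \<in> U}"
        using R(2) open_trans_set(1)[OF U, of s] hf(2) by (intro emeasure_mono) (auto simp: W_def)
      then show "emeasure m (Pair s -` R) \<le> emeasure m U"
        using haar_trans_meas[OF cpt haar U] by simp
    qed
    also have "\<dots> = emeasure m U * emeasure \<nu> (space \<nu>)" by simp
    finally show "emeasure (\<nu> \<Otimes>\<^sub>M m) R \<le> emeasure m U * emeasure \<nu> (space \<nu>)" .
  qed
  have ge: "(\<integral>\<^sup>+s. emeasure m {x. (x,s) \<in> W2} \<partial>\<nu>) \<le> (\<integral>\<^sup>+t. emeasure \<nu> {s. -s + t \<in> U} \<partial>m)"
  proof (rule GL[OF hf(1) fn hf(2) sn hf(3) inn W2o])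
    fix R assume R: "R \<in> sets (m \<Otimes>\<^sub>M \<nu>)" "R \<subseteq> W2"
    have "emeasure (m \<Otimes>\<^sub>M \<nu>) R = (\<integral>\<^sup>+t. emeasure \<nu> (Pair t -` R) \<partial>m)"
      by (rule N.emeasure_pair_measure_alt[OF R(1)])
    also have "\<dots> \<le> (\<integral>\<^sup>+t. emeasure \<nu> {s. -s + t \<in> U} \<partial>m)"
    proof (rule nn_integral_mono)
      fix t
      show "emeasure \<nu> (Pair t -` R) \<le> emeasure \<nu> {s. -s + t \<in> U}"
        using R(2) open_trans_set(2)[OF U, of t] sn by (intro emeasure_mono) (auto simp: W2_def)
    qed
    finally show "emeasure (m \<Otimes>\<^sub>M \<nu>) R \<le> (\<integral>\<^sup>+t. emeasure \<nu> {s. -s + t \<in> U} \<partial>m)" .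
  qed
  have "(\<integral>\<^sup>+s. emeasure m {x. (x,s) \<in> W2} \<partial>\<nu>) = emeasure m U * emeasure \<nu> (space \<nu>)"
    using haar_trans_meas[OF cpt haar U] by (simp add: W2_def)
  moreover have "{x. (x,t) \<in> W} = {s. -s + t \<in> U}" for t by (simp add: W_def)
  ultimately show ?thesis using le ge by (simp add: mult.commute antisym)
qed

lemma haar_fubini_meas:
  fixes m \<nu> :: "'g::{topological_group_add,t2_space} measure"
  assumes sm: "sets m = sets borel" and sn: "sets \<nu> = sets borel" and inn: "inner_borel \<nu>"
    and U: "open U"
  shows "(\<lambda>t. emeasure \<nu> {s. -s + t \<in> U}) \<in> borel_measurable m"
proof -
  define W where "W = {p::'g\<times>'g. -fst p + snd p \<in> U}"
  have Wo: "open W" unfolding W_def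
  proof -
    have "continuous_on UNIV (\<lambda>p::'g\<times>'g. -fst p + snd p)" by (intro continuous_intros)
    then have "open ((\<lambda>p::'g\<times>'g. -fst p + snd p) -` U \<inter> UNIV)"
      using U continuous_on_open_vimage[of UNIV "\<lambda>p::'g\<times>'g. -fst p + snd p"] by auto
    then show "open {p::'g\<times>'g. -fst p + snd p \<in> U}" by (simp add: vimage_def)
  qed
  show ?thesis using section_measurable[OF inn Wo sm sn] by (simp add: W_def)
qed


lemma trans_preimage_sets:
  fixes M :: "'g::topological_group_add measure"
  assumes sM: "sets M = sets borel" and A: "A \<in> sets borel"
  shows "{s. -s + t \<in> A} \<in> sets M"
proof -
  have "continuous_on UNIV (\<lambda>s::'g. -s + t)" by (intro continuous_intros)
  then have "(\<lambda>s::'g. -s + t) \<in> borel_measurable borel" by (rule borel_measurable_continuous_onI)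
  then have "(\<lambda>s::'g. -s + t) -` A \<inter> space borel \<in> sets borel" using A by (rule measurable_sets)
  then show ?thesis using sM by (simp add: vimage_def)
qed

lemma conv_bound:
  fixes M :: "'g::topological_group_add measure" and h :: "'g \<Rightarrow> complex"
  assumes sM: "sets M = sets borel" and hint: "integrable M h" and A: "A \<in> sets borel"
  shows "ennreal (cmod (conv_indicator M h A t)) \<le> emeasure (density M (\<lambda>s. ennreal (cmod (h s)))) {s. -s + t \<in> A}"
proof -
  define S where "S = {s. -s + t \<in> A}"
  have S: "S \<in> sets M" unfolding S_def by (rule trans_preimage_sets[OF sM A])
  have eq: "(\<lambda>s. indicator A (- s + t) * h s) = (\<lambda>s. indicator S s * h s)"
    by (auto simp: S_def indicator_def)
  have int: "integrable M (\<lambda>s. indicator S s * h s)"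
  proof -
    have "(\<lambda>s. indicator S s *\<^sub>R h s) = (\<lambda>s. indicator S s * h s)"
      by (auto simp: indicator_def)
    then show ?thesis using integrable_mult_indicator[OF S hint] by simp
  qed
  have "ennreal (cmod (conv_indicator M h A t)) \<le> (\<integral>\<^sup>+s. ennreal (norm (indicator S s * h s)) \<partial>M)"
    unfolding conv_indicator_def eq by (rule integral_norm_bound_ennreal[OF int])
  also have "\<dots> = (\<integral>\<^sup>+s. ennreal (cmod (h s)) * indicator S s \<partial>M)"
    by (intro nn_integral_cong) (auto simp: indicator_def)
  also have "\<dots> = emeasure (density M (\<lambda>s. ennreal (cmod (h s)))) S"
    using S borel_measurable_integrable[OF hint] by (subst emeasure_density) auto
  finally show ?thesis unfolding S_def .
qed

lemma young_bound:
  fixes \<Phi> :: "real \<Rightarrow> real"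
  assumes y: "young_function \<Phi>" and x: "0 \<le> x" "x \<le> H" and H: "0 < H" and k: "0 < k"
  shows "\<Phi> (x / k) \<le> (x / H) * \<Phi> (H / k)"
proof -
  have c: "convex_on {0..} \<Phi>" and z: "\<Phi> 0 = 0" using y unfolding young_function_def by auto
  have "\<Phi> ((1 - x/H) *\<^sub>R 0 + (x/H) *\<^sub>R (H/k)) \<le> (1 - x/H) * \<Phi> 0 + (x/H) * \<Phi> (H/k)"
    using x H k by (intro convex_onD[OF c]) (auto simp: field_simps)
  moreover have "(1 - x/H) *\<^sub>R 0 + (x/H) *\<^sub>R (H/k) = x / k" using H by simp
  ultimately show ?thesis using z H by simp
qed



lemma part1:
  fixes m M :: "'g::{topological_group_add, t2_space} measure"
    and h :: "'g \<Rightarrow> complex" and \<Phi> :: "real \<Rightarrow> real"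
  assumes cpt: "compact (UNIV :: 'g set)" and haar: "normalized_haar m"
    and fM: "finite_measure M" and rM: "regular_borel M"
    and hint: "integrable M h" and y: "young_function \<Phi>"
  shows "\<forall>\<epsilon>>0. \<exists>\<delta>>0. \<forall>A\<in>sets borel. measure m A < \<delta> \<longrightarrow>
            luxemburg_norm \<Phi> m (conv_indicator M h A) < \<epsilon>"
proof (intro allI impI)
  fix \<epsilon> :: real assume \<epsilon>: "\<epsilon> > 0"
  note hf = haar_facts[OF cpt haar]
  interpret Mm: finite_measure m by (rule hf(1))
  have sM: "sets M = sets borel" using rM unfolding regular_borel_def by auto
  have innM: "inner_borel M" by (rule regular_inner_borel[OF fM rM cpt])
  define \<nu> where "\<nu> = density M (\<lambda>s. ennreal (cmod (h s)))"
  define H where "H = (\<integral>s. cmod (h s) \<partial>M)"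
  have H0: "0 \<le> H" unfolding H_def by simp
  have hmeas: "(\<lambda>s. ennreal (cmod (h s))) \<in> borel_measurable M"
    using borel_measurable_integrable[OF hint] by simp
  have tot: "emeasure \<nu> (space \<nu>) = ennreal H"
  proof -
    have "emeasure \<nu> (space \<nu>) = (\<integral>\<^sup>+s. ennreal (cmod (h s)) * indicator (space M) s \<partial>M)"
      unfolding \<nu>_def using hmeas by (subst emeasure_density) auto
    also have "\<dots> = (\<integral>\<^sup>+s. ennreal (cmod (h s)) \<partial>M)"
      by (intro nn_integral_cong) (auto simp: indicator_def)
    also have "\<dots> = ennreal H"
      unfolding H_def using hint by (intro nn_integral_eq_integral) auto
    finally show ?thesis .
  qed
  have fn: "finite_measure \<nu>" using tot by (intro finite_measureI) auto
  have sn: "sets \<nu> = sets borel" unfolding \<nu>_def using sM by simp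
  have inn: "inner_borel \<nu>" unfolding \<nu>_def by (rule density_inner_borel[OF fM sM innM hmeas])
  have cb: "ennreal (cmod (conv_indicator M h A t)) \<le> emeasure \<nu> {s. -s + t \<in> A}"
    if "A \<in> sets borel" for A t
    unfolding \<nu>_def by (rule conv_bound[OF sM hint that])
  have cH: "cmod (conv_indicator M h A t) \<le> H" if A: "A \<in> sets borel" for A t
  proof -
    have "ennreal (cmod (conv_indicator M h A t)) \<le> emeasure \<nu> (space \<nu>)"
      using cb[OF A, of t] by (rule order_trans) (rule emeasure_space)
    then show ?thesis using tot H0 by simp
  qed
  define k where "k = \<epsilon> / 2"
  have k: "0 < k" "k < \<epsilon>" using \<epsilon> unfolding k_def by auto
  define P where "P = \<Phi> (H / k)"
  have P0: "0 \<le> P" unfolding P_def using y H0 k unfolding young_function_def by auto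
  define \<delta> where "\<delta> = 1 / (P + 1)"
  have \<delta>0: "\<delta> > 0" unfolding \<delta>_def using P0 by simp
  show "\<exists>\<delta>>0. \<forall>A\<in>sets borel. measure m A < \<delta> \<longrightarrow> luxemburg_norm \<Phi> m (conv_indicator M h A) < \<epsilon>"
  proof (intro exI[of _ \<delta>] conjI \<delta>0 ballI impI)
    fix A :: "'g set" assume A: "A \<in> sets borel" and mA: "measure m A < \<delta>"
    have outer: "emeasure m A = (INF U\<in>{U. open U \<and> A \<subseteq> U}. emeasure m U)"
      using haar A unfolding normalized_haar_def regular_borel_def by blast
    have "emeasure m A < ennreal \<delta>"
      using mA \<delta>0 by (simp add: Mm.emeasure_eq_measure ennreal_lessI)
    then obtain U where U: "open U" "A \<subseteq> U" "emeasure m U < ennreal \<delta>"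
      unfolding outer by (auto simp: INF_less_iff)
    have int_le: "(\<integral>\<^sup>+t. ennreal (\<Phi> (cmod (conv_indicator M h A t) / k)) \<partial>m) \<le> 1"
    proof (cases "H = 0")
      case True
      then have "\<And>t. cmod (conv_indicator M h A t) = 0" using cH[OF A] by (metis norm_ge_zero order_antisym)
      moreover have "\<Phi> 0 = 0" using y unfolding young_function_def by auto
      ultimately show ?thesis by simp
    next
      case False
      then have Hp: "H > 0" using H0 by simp
      have pw: "ennreal (\<Phi> (cmod (conv_indicator M h A t) / k)) \<le> ennreal (P / H) * emeasure \<nu> {s. -s + t \<in> U}" for t
      proof -
        let ?x = "cmod (conv_indicator M h A t)"
        have "\<Phi> (?x / k) \<le> (?x / H) * P"
          unfolding P_def using young_bound[OF y _ cH[OF A] Hp k(1)] by simp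
        then have "ennreal (\<Phi> (?x / k)) \<le> ennreal (P / H) * ennreal ?x"
          using Hp P0 by (simp add: ennreal_mult[symmetric] ennreal_leI mult.commute del: ennreal_mult')
        also have "ennreal ?x \<le> emeasure \<nu> {s. -s + t \<in> A}" by (rule cb[OF A])
        also have "\<dots> \<le> emeasure \<nu> {s. -s + t \<in> U}"
          using U(2) trans_preimage_sets[OF sn, of U t] U(1) by (intro emeasure_mono) (auto simp: borel_open)
        finally show ?thesis by (simp add: mult_left_mono)
      qed
      have "(\<integral>\<^sup>+t. ennreal (\<Phi> (cmod (conv_indicator M h A t) / k)) \<partial>m)
          \<le> (\<integral>\<^sup>+t. ennreal (P / H) * emeasure \<nu> {s. -s + t \<in> U} \<partial>m)"
        by (intro nn_integral_mono pw)
      also have "\<dots> = ennreal (P / H) * (\<integral>\<^sup>+t. emeasure \<nu> {s. -s + t \<in> U} \<partial>m)"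
        by (rule nn_integral_cmult[OF haar_fubini_meas[OF hf(2) sn inn U(1)]])
      also have "\<dots> = ennreal (P / H) * (ennreal H * emeasure m U)"
        using haar_fubini[OF cpt haar fn sn inn U(1)] tot by simp
      also have "\<dots> \<le> ennreal (P / H) * (ennreal H * ennreal \<delta>)"
        using U(3) by (intro mult_left_mono) auto
      also have "\<dots> = ennreal (P / (P + 1))"
        using Hp P0 \<delta>0 unfolding \<delta>_def
        by (simp add: ennreal_mult[symmetric] del: ennreal_mult')
      also have "\<dots> \<le> 1" using P0 by simp
      finally show ?thesis .
    qed
    have "luxemburg_norm \<Phi> m (conv_indicator M h A) \<le> k"
      unfolding luxemburg_norm_def
      using k int_le by (intro cInf_lower) (auto intro: bdd_belowI[of _ 0])
    then show "luxemburg_norm \<Phi> m (conv_indicator M h A) < \<epsilon>" using k by simp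
  qed
qed


lemma haar_fubini_compact:
  fixes m \<nu> :: "'g::{topological_group_add,t2_space} measure"
  assumes cpt: "compact (UNIV::'g set)" and haar: "normalized_haar m"
    and fn: "finite_measure \<nu>" and sn: "sets \<nu> = sets borel" and inn: "inner_borel \<nu>"
    and K: "compact K"
  shows "(\<integral>\<^sup>+t. emeasure \<nu> {s. -s + t \<in> K} \<partial>m) = emeasure \<nu> (space \<nu>) * emeasure m K"
proof -
  note hf = haar_facts[OF cpt haar]
  interpret N: finite_measure \<nu> by fact
  interpret M: finite_measure m by (rule hf(1))
  define U where "U = - K"
  have U: "open U" unfolding U_def using K by (simp add: compact_imp_closed open_Compl)
  have spn: "space \<nu> = UNIV" using sets_eq_imp_space_eq[OF sn] by simp
  define pX where "pX = measure \<nu> (space \<nu>)"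
  define a where "a = measure m U"
  define b where "b = measure m K"
  have Kb: "K \<in> sets borel" using K by (simp add: compact_imp_closed borel_closed)
  have ab: "a + b = 1"
  proof -
    have "measure m (space m) = 1" using haar hf(1) unfolding normalized_haar_def
      by (simp add: M.emeasure_eq_measure)
    moreover have "measure m (space m) = measure m U + measure m K"
      using hf(2,4) U Kb by (subst M.finite_measure_Union[symmetric]) (auto simp: U_def borel_open)
    ultimately show ?thesis unfolding a_def b_def by simp
  qed
  have a0: "0 \<le> a" "0 \<le> pX" unfolding a_def pX_def by auto
  have eq: "emeasure \<nu> {s. -s + t \<in> K} = ennreal pX - emeasure \<nu> {s. -s + t \<in> U}" for t
  proof -
    have "{s. -s + t \<in> K} = space \<nu> - {s. -s + t \<in> U}" using spn by (auto simp: U_def)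
    moreover have "{s. -s + t \<in> U} \<in> sets \<nu>" using trans_preimage_sets[OF sn, of U t] U by (simp add: borel_open)
    ultimately show ?thesis
      using emeasure_compl[of "{s. -s + t \<in> U}" \<nu>] by (simp add: N.emeasure_eq_measure pX_def)
  qed
  have "(\<integral>\<^sup>+t. emeasure \<nu> {s. -s + t \<in> K} \<partial>m) = (\<integral>\<^sup>+t. ennreal pX - emeasure \<nu> {s. -s + t \<in> U} \<partial>m)"
    by (simp add: eq)
  also have "\<dots> = (\<integral>\<^sup>+t. ennreal pX \<partial>m) - (\<integral>\<^sup>+t. emeasure \<nu> {s. -s + t \<in> U} \<partial>m)"
  proof (rule nn_integral_diff)
    show "(\<lambda>t. emeasure \<nu> {s. -s + t \<in> U}) \<in> borel_measurable m"
      by (rule haar_fubini_meas[OF hf(2) sn inn U])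
    show "(\<integral>\<^sup>+t. emeasure \<nu> {s. -s + t \<in> U} \<partial>m) \<noteq> \<infinity>"
      using haar_fubini[OF cpt haar fn sn inn U] by (simp add: N.emeasure_eq_measure M.emeasure_eq_measure ennreal_mult_eq_top_iff)
    show "AE t in m. emeasure \<nu> {s. -s + t \<in> U} \<le> ennreal pX"
      unfolding pX_def by (auto simp: N.emeasure_eq_measure[symmetric] intro!: emeasure_space)
  qed auto
  also have "\<dots> = ennreal pX - ennreal pX * ennreal a"
    using haar_fubini[OF cpt haar fn sn inn U] haar unfolding normalized_haar_def
    by (simp add: N.emeasure_eq_measure M.emeasure_eq_measure pX_def a_def)
  also have "\<dots> = ennreal (pX * b)"
  proof -
    have "ennreal pX * ennreal a = ennreal (pX * a)" using a0 by (simp add: ennreal_mult)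
    moreover have "ennreal pX - ennreal (pX * a) = ennreal (pX - pX * a)"
      using a0 by (intro ennreal_minus) simp
    moreover have "pX - pX * a = pX * b" using ab by (metis add_diff_cancel_left' mult.commute right_diff_distrib mult_1)
    ultimately show ?thesis by simp
  qed
  also have "\<dots> = emeasure \<nu> (space \<nu>) * emeasure m K"
    using a0 by (simp add: N.emeasure_eq_measure M.emeasure_eq_measure pX_def b_def ennreal_mult)
  finally show ?thesis .
qed


lemma dens_props:
  fixes M :: "'g::t2_space measure"
  assumes fM: "finite_measure M" and sM: "sets M = sets borel" and innM: "inner_borel M"
    and g: "g \<in> borel_measurable M" and fin: "(\<integral>\<^sup>+s. g s \<partial>M) \<noteq> \<infinity>"
  shows "finite_measure (density M g)" "sets (density M g) = sets borel" "inner_borel (density M g)"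
    "emeasure (density M g) (space (density M g)) = (\<integral>\<^sup>+s. g s \<partial>M)"
proof -
  show tot: "emeasure (density M g) (space (density M g)) = (\<integral>\<^sup>+s. g s \<partial>M)"
    using g by (subst emeasure_density) (auto intro!: nn_integral_cong simp: indicator_def)
  show "finite_measure (density M g)" using tot fin by (intro finite_measureI) auto
  show "sets (density M g) = sets borel" using sM by simp
  show "inner_borel (density M g)" by (rule density_inner_borel[OF fM sM innM g])
qed

lemma part2:
  fixes m M :: "'g::{topological_group_add, t2_space} measure"
    and h :: "'g \<Rightarrow> complex"
  assumes cpt: "compact (UNIV :: 'g set)" and haar: "normalized_haar m"
    and fM: "finite_measure M" and rM: "regular_borel M"
    and hint: "integrable M h"
  shows "(\<integral>s. h s \<partial>M) \<noteq> 0 \<longrightarrow>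
            (\<forall>A\<in>sets borel.
               (\<forall>B\<in>sets borel. B \<subseteq> A \<longrightarrow> (AE t in m. conv_indicator M h B t = 0))
               \<longrightarrow> emeasure m A = 0)"
proof (intro impI ballI)
  assume z0: "(\<integral>s. h s \<partial>M) \<noteq> 0"
  fix A :: "'g set" assume A: "A \<in> sets borel"
    and hyp: "\<forall>B\<in>sets borel. B \<subseteq> A \<longrightarrow> (AE t in m. conv_indicator M h B t = 0)"
  note hf = haar_facts[OF cpt haar]
  interpret Mm: finite_measure m by (rule hf(1))
  have sM: "sets M = sets borel" using rM unfolding regular_borel_def by auto
  have innM: "inner_borel M" by (rule regular_inner_borel[OF fM rM cpt])
  show "emeasure m A = 0"
  proof (rule ccontr)
    assume "emeasure m A \<noteq> 0"
    then have "0 < (SUP K\<in>{K. compact K \<and> K \<subseteq> A}. emeasure m K)"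
      using hf(3) A unfolding inner_borel_def by (metis not_gr_zero)
    then obtain K where K: "compact K" "K \<subseteq> A" "0 < emeasure m K"
      by (auto simp: less_SUP_iff)
    have Kb: "K \<in> sets borel" using K by (simp add: compact_imp_closed borel_closed)
    have AE0: "AE t in m. conv_indicator M h K t = 0" using hyp Kb K(2) by blast
    define z where "z = (\<integral>s. h s \<partial>M)"
    define c where "c = cnj z / complex_of_real (cmod z)"
    define hr where "hr s = Re (c * h s)" for s
    have hrint: "integrable M hr" unfolding hr_def using hint by auto
    have hrz: "(\<integral>s. hr s \<partial>M) = cmod z"
    proof -
      have "(\<integral>s. hr s \<partial>M) = Re (\<integral>s. c * h s \<partial>M)"
        unfolding hr_def using hint by (subst integral_Re) auto
      also have "\<dots> = Re (c * z)" unfolding z_def by simp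
      also have "c * z = complex_of_real (cmod z)"
        unfolding c_def using z0 z_def
        by (simp add: complex_norm_square[symmetric] power2_eq_square field_simps)
      finally show ?thesis by simp
    qed
    have hrm: "hr \<in> borel_measurable M" using hrint by auto
    define \<nu>p where "\<nu>p = density M (\<lambda>s. ennreal (hr s))"
    define \<nu>n where "\<nu>n = density M (\<lambda>s. ennreal (- hr s))"
    have finp: "(\<integral>\<^sup>+s. ennreal (hr s) \<partial>M) \<noteq> \<infinity>" and finn: "(\<integral>\<^sup>+s. ennreal (- hr s) \<partial>M) \<noteq> \<infinity>"
      using integrableD[OF hrint] by auto
    note pp = dens_props[OF fM sM innM _ finp, folded \<nu>p_def]
    note nn = dens_props[OF fM sM innM _ finn, folded \<nu>n_def]
    have pp': "finite_measure \<nu>p" "sets \<nu>p = sets borel" "inner_borel \<nu>p"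
      "emeasure \<nu>p (space \<nu>p) = (\<integral>\<^sup>+s. ennreal (hr s) \<partial>M)" using pp hrm by auto
    have nn': "finite_measure \<nu>n" "sets \<nu>n = sets borel" "inner_borel \<nu>n"
      "emeasure \<nu>n (space \<nu>n) = (\<integral>\<^sup>+s. ennreal (- hr s) \<partial>M)" using nn hrm by auto
    interpret P: finite_measure \<nu>p by (rule pp'(1))
    interpret N: finite_measure \<nu>n by (rule nn'(1))
    have key: "emeasure \<nu>p {s. -s + t \<in> K} = emeasure \<nu>n {s. -s + t \<in> K}"
      if ct: "conv_indicator M h K t = 0" for t
    proof -
      define S where "S = {s. -s + t \<in> K}"
      have S: "S \<in> sets M" unfolding S_def by (rule trans_preimage_sets[OF sM Kb])
      have eq: "(\<lambda>s. indicator K (- s + t) * h s) = (\<lambda>s. indicator S s * h s)"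
        by (auto simp: S_def indicator_def)
      have int: "integrable M (\<lambda>s. indicator S s * h s)"
      proof -
        have "(\<lambda>s. indicator S s *\<^sub>R h s) = (\<lambda>s. indicator S s * h s)"
          by (auto simp: indicator_def)
        then show ?thesis using integrable_mult_indicator[OF S hint] by simp
      qed
      have int2: "integrable M (\<lambda>s. indicator S s * hr s)"
        using integrable_real_mult_indicator[OF S hrint] by (simp add: mult.commute)
      have "0 = Re (c * conv_indicator M h K t)" using ct by simp
      also have "\<dots> = Re (\<integral>s. c * (indicator S s * h s) \<partial>M)"
        unfolding conv_indicator_def eq by simp
      also have "\<dots> = (\<integral>s. Re (c * (indicator S s * h s)) \<partial>M)"
        using int by (subst integral_Re) auto
      also have "\<dots> = (\<integral>s. indicator S s * hr s \<partial>M)"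
        unfolding hr_def by (intro Bochner_Integration.integral_cong) (auto simp: indicator_def)
      also have "\<dots> = enn2real (\<integral>\<^sup>+s. ennreal (indicator S s * hr s) \<partial>M) - enn2real (\<integral>\<^sup>+s. ennreal (- (indicator S s * hr s)) \<partial>M)"
        by (rule real_lebesgue_integral_def[OF int2])
      also have "(\<integral>\<^sup>+s. ennreal (indicator S s * hr s) \<partial>M) = emeasure \<nu>p S"
        unfolding \<nu>p_def using S hrm
        by (subst emeasure_density) (auto intro!: nn_integral_cong simp: indicator_def)
      also have "(\<integral>\<^sup>+s. ennreal (- (indicator S s * hr s)) \<partial>M) = emeasure \<nu>n S"
        unfolding \<nu>n_def using S hrm
        by (subst emeasure_density) (auto intro!: nn_integral_cong simp: indicator_def)
      finally have "measure \<nu>p S = measure \<nu>n S"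
        by (simp add: P.emeasure_eq_measure N.emeasure_eq_measure)
      then show ?thesis unfolding S_def[symmetric]
        by (simp add: P.emeasure_eq_measure N.emeasure_eq_measure)
    qed
    have "(\<integral>\<^sup>+t. emeasure \<nu>p {s. -s + t \<in> K} \<partial>m) = (\<integral>\<^sup>+t. emeasure \<nu>n {s. -s + t \<in> K} \<partial>m)"
    proof (rule nn_integral_cong_AE)
      show "AE t in m. emeasure \<nu>p {s. -s + t \<in> K} = emeasure \<nu>n {s. -s + t \<in> K}"
        using AE0 by (rule AE_mp) (intro AE_I2 impI key)
    qed
    then have "emeasure \<nu>p (space \<nu>p) * emeasure m K = emeasure \<nu>n (space \<nu>n) * emeasure m K"
      using haar_fubini_compact[OF cpt haar pp'(1,2,3) K(1)] haar_fubini_compact[OF cpt haar nn'(1,2,3) K(1)]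
      by simp
    then have "measure \<nu>p (space \<nu>p) * measure m K = measure \<nu>n (space \<nu>n) * measure m K"
      by (simp add: P.emeasure_eq_measure N.emeasure_eq_measure Mm.emeasure_eq_measure ennreal_mult[symmetric] del: ennreal_mult')
    moreover have "measure m K > 0" using K(3) by (simp add: Mm.emeasure_eq_measure)
    ultimately have eqPN: "measure \<nu>p (space \<nu>p) = measure \<nu>n (space \<nu>n)" by simp
    have "(\<integral>s. hr s \<partial>M) = enn2real (\<integral>\<^sup>+s. ennreal (hr s) \<partial>M) - enn2real (\<integral>\<^sup>+s. ennreal (- hr s) \<partial>M)"
      by (rule real_lebesgue_integral_def[OF hrint])
    also have "\<dots> = measure \<nu>p (space \<nu>p) - measure \<nu>n (space \<nu>n)"
      using pp'(4) nn'(4) by (simp add: measure_def)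
    also have "\<dots> = 0" using eqPN by simp
    finally have "cmod z = 0" using hrz by simp
    then show False using z0 unfolding z_def by simp
  qed
qed

theorem corollary4p6:
  fixes m M :: "'g::{topological_group_add, t2_space} measure"
    and h :: "'g \<Rightarrow> complex"
    and \<Phi> :: "real \<Rightarrow> real"
  assumes "compact (UNIV :: 'g set)"
    and "normalized_haar m"
    and "finite_measure M" and "regular_borel M"
    and "h \<in> borel_measurable M" and "integrable M h"
    and "young_function \<Phi>"
    and "delta2 (\<lambda>x. ennreal (\<Phi> x))" and "delta2 (complementary \<Phi>)"
  shows "(\<forall>\<epsilon>>0. \<exists>\<delta>>0. \<forall>A\<in>sets borel. measure m A < \<delta> \<longrightarrow>
            luxemburg_norm \<Phi> m (conv_indicator M h A) < \<epsilon>)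
       \<and> ((\<integral>s. h s \<partial>M) \<noteq> 0 \<longrightarrow>
            (\<forall>A\<in>sets borel.
               (\<forall>B\<in>sets borel. B \<subseteq> A \<longrightarrow> (AE t in m. conv_indicator M h B t = 0))
               \<longrightarrow> emeasure m A = 0))"
  proof (rule conjI)
  show "\<forall>\<epsilon>>0. \<exists>\<delta>>0. \<forall>A\<in>sets borel. measure m A < \<delta> \<longrightarrow>
            luxemburg_norm \<Phi> m (conv_indicator M h A) < \<epsilon>"
    by (rule part1[OF assms(1,2,3,4,6,7)])
  show "(\<integral>s. h s \<partial>M) \<noteq> 0 \<longrightarrow>
            (\<forall>A\<in>sets borel.
               (\<forall>B\<in>sets borel. B \<subseteq> A \<longrightarrow> (AE t in m. conv_indicator M h B t = 0))
               \<longrightarrow> emeasure m A = 0)"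
    by (rule part2[OF assms(1,2,3,4,6)])
qed

end
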